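(* For fixed $p\in(\tfrac12,1)$, as $n\to\infty$, $$\frac{\tilde T_n^p-np}{\sqrt n}\Rightarrow N(0,p(1-p)).$$
   Context: For $n\ge2$, $p\in(0,1)$, $\tilde\Omega_n^p$ is the probability space of strings $\omega\in\{0,1\}^n$ with $\omega_1=0$, $\omega_n=1$ and $\omega_2,\dots,\omega_{n-1}$ independent, each $1$ with probability $p$ and $0$ with probability $1-p$. One step of the evolution replaces simultaneously every occurrence of the consecutive substring "01" by "10"; $\tilde T_n^p(\omega)$ is the number of steps needed to reach a string of the form $1\cdots10\cdots0$. $\Rightarrow$ is convergence in distribution; $N(0,\sigma^2)$ is a centered Gaussian with variance $\sigma^2$. *)

theory Defs
  imports "HOL-Probability.Probability"
begin

text \<open>A binary string of length n is encoded as a function nat => bool on positions 1..n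
  (True = 1, False = 0); positions outside 1..n are False.\<close>

text \<open>One step: every occurrence of 01 at positions (i, i+1) is replaced simultaneously by 10.\<close>
definition step :: "nat \<Rightarrow> (nat \<Rightarrow> bool) \<Rightarrow> (nat \<Rightarrow> bool)" where
  "step n \<omega> i =
     (if 1 \<le> i \<and> i \<le> n then
        (if \<not> \<omega> i \<and> i < n \<and> \<omega> (i + 1) then True
         else if \<omega> i \<and> 1 < i \<and> \<not> \<omega> (i - 1) then False
         else \<omega> i)
      else \<omega> i)"

definition is_sorted_str :: "nat \<Rightarrow> (nat \<Rightarrow> bool) \<Rightarrow> bool" where
  "is_sorted_str n \<omega> \<longleftrightarrow> (\<exists>j\<le>n. \<forall>i\<in>{1..n}. \<omega> i = (i \<le> j))"

definition T_steps :: "nat \<Rightarrow> (nat \<Rightarrow> bool) \<Rightarrow> nat" where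
  "T_steps n \<omega> = (LEAST k. is_sorted_str n ((step n ^^ k) \<omega>))"

definition strings_pmf :: "nat \<Rightarrow> real \<Rightarrow> (nat \<Rightarrow> bool) pmf" where
  "strings_pmf n p =
     map_pmf (\<lambda>\<omega>. fun_upd (fun_upd \<omega> 1 False) n True) (Pi_pmf {2..<n} False (\<lambda>_. bernoulli_pmf p))"

end

theory Submission
  imports Defs "HOL-Real_Asymp.Real_Asymp"
begin


fun zc :: "(nat \<Rightarrow> bool) \<Rightarrow> nat \<Rightarrow> nat" where
  "zc \<omega> 0 = 0"
| "zc \<omega> (Suc m) = zc \<omega> m + (if \<omega> (Suc m) then 0 else 1)"

lemma zc_mono: "i \<le> j \<Longrightarrow> zc \<omega> i \<le> zc \<omega> j"
  by (induction j) (auto simp: le_Suc_eq)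

lemma zc_lip: "i \<le> j \<Longrightarrow> zc \<omega> j \<le> zc \<omega> i + (j - i)"
  by (induction j) (auto simp: le_Suc_eq Suc_diff_le)

lemma zc_le: "zc \<omega> i \<le> i"
  using zc_lip[of 0 i \<omega>] by simp

lemma zc_step_aux:
  fixes x x' :: int
  shows "x' = x - (if P \<and> \<not>a \<and> b then 1 else 0) \<Longrightarrow> st = (if \<not>b \<and> Q \<and> c then True else if b \<and> P \<and> \<not> a then False else b)
   \<Longrightarrow> x' + (if st then 0 else 1) = x + (if b then 0 else 1) - (if Q \<and> \<not>b \<and> c then 1 else 0)"
  by auto

lemma zc_step:
  assumes "m \<le> n"
  shows "int (zc (step n \<omega>) m) = int (zc \<omega> m) - (if 0 < m \<and> m < n \<and> \<not> \<omega> m \<and> \<omega> (Suc m) then 1 else 0)"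
  using assms
proof (induction m)
  case 0 then show ?case by simp
next
  case (Suc m)
  then have IH: "int (zc (step n \<omega>) m) = int (zc \<omega> m) - (if 0 < m \<and> \<not> \<omega> m \<and> \<omega> (Suc m) then 1 else 0)"
    by simp
  have st: "step n \<omega> (Suc m) = (if \<not> \<omega> (Suc m) \<and> Suc m < n \<and> \<omega> (Suc (Suc m)) then True
         else if \<omega> (Suc m) \<and> 0 < m \<and> \<not> \<omega> m then False else \<omega> (Suc m))"
  proof -
    have c: "1 \<le> Suc m \<and> Suc m \<le> n" using Suc.prems by simp
    have d: "Suc m + 1 = Suc (Suc m)" "Suc m - 1 = m" "(1 < Suc m) = (0 < m)" by auto
    show ?thesis by (simp only: step_def if_P[OF c] d)
  qed
  have e1: "int (zc (step n \<omega>) (Suc m)) = int (zc (step n \<omega>) m) + (if step n \<omega> (Suc m) then 0 else 1)" by simp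
  have e2: "int (zc \<omega> (Suc m)) = int (zc \<omega> m) + (if \<omega> (Suc m) then 0 else 1)" by simp
  have "int (zc (step n \<omega>) m) + (if step n \<omega> (Suc m) then 0 else 1) = int (zc \<omega> m) + (if \<omega> (Suc m) then 0 else 1) - (if Suc m < n \<and> \<not> \<omega> (Suc m) \<and> \<omega> (Suc (Suc m)) then 1 else 0)"
    by (rule zc_step_aux[OF IH st])
  then show ?case using e1 e2 by simp
qed

definition H :: "nat \<Rightarrow> (nat \<Rightarrow> bool) \<Rightarrow> int \<Rightarrow> int" where
  "H n \<omega> m = (if m \<le> 0 then 0 else if m \<le> int n then int (zc \<omega> (nat m)) else int (zc \<omega> n) + (m - int n))"

lemma H_nat: "j \<le> n \<Longrightarrow> H n \<omega> (int j) = int (zc \<omega> j)"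
  by (simp add: H_def)

lemma H_step:
  assumes "n \<ge> 1"
  shows "H n (step n \<omega>) m = max (H n \<omega> (m-1)) (H n \<omega> (m+1) - 1)"
proof -
  consider "m \<le> 0" | "1 \<le> m \<and> m < int n" | "m = int n" | "m > int n" by linarith
  then show ?thesis
  proof cases
    case 1
    have z1: "zc \<omega> 1 \<le> 1" using zc_le[of \<omega> 1] .
    show ?thesis
    proof (cases "m = 0")
      case True
      have "H n \<omega> (m+1) = int (zc \<omega> 1)" using True assms H_nat[of 1 n \<omega>] by simp
      moreover have "H n \<omega> (m-1) = 0" "H n (step n \<omega>) m = 0" using True by (simp_all add: H_def)
      ultimately show ?thesis using z1 by simp
    next
      case False
      then have "m + 1 \<le> 0" "m - 1 \<le> 0" using 1 by auto
      then show ?thesis using 1 by (simp add: H_def)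
    qed
  next
    case 2
    define k where "k = nat m"
    have k: "m = int k" "1 \<le> k" "k < n" using 2 by (auto simp: k_def)
    obtain k' where k': "k = Suc k'" using k(2) by (cases k) auto
    have a: "int (zc (step n \<omega>) k) = int (zc \<omega> k) - (if \<not> \<omega> k \<and> \<omega> (Suc k) then 1 else 0)"
      using zc_step[of k n \<omega>] k by simp
    have b: "int (zc \<omega> (Suc k)) = int (zc \<omega> k) + (if \<omega> (Suc k) then 0 else 1)" by simp
    have c: "int (zc \<omega> k) = int (zc \<omega> k') + (if \<omega> k then 0 else 1)" using k' by simp
    have h1: "H n (step n \<omega>) m = int (zc (step n \<omega>) k)" using k H_nat[of k n] by simp
    have h2: "H n \<omega> (m - 1) = int (zc \<omega> k')" using k k' H_nat[of k' n] by simp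
    have h3: "H n \<omega> (m + 1) = int (zc \<omega> (Suc k))" using k H_nat[of "Suc k" n \<omega>] by (simp add: add.commute)
    show ?thesis unfolding h1 h2 h3 a b c by (cases "\<omega> k"; cases "\<omega> (Suc k)") simp_all
  next
    case 3
    have a: "int (zc (step n \<omega>) n) = int (zc \<omega> n)" using zc_step[of n n \<omega>] by simp
    have "zc \<omega> (n - 1) \<le> zc \<omega> n" by (rule zc_mono) simp
    moreover have "H n (step n \<omega>) m = int (zc \<omega> n)" using 3 a H_nat[of n n] by simp
    moreover have "H n \<omega> (m - 1) = int (zc \<omega> (n - 1))" using 3 assms H_nat[of "n - 1" n] by (simp add: of_nat_diff)
    moreover have "H n \<omega> (m + 1) = int (zc \<omega> n) + 1" using 3 by (simp add: H_def)
    ultimately show ?thesis by simp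
  next
    case 4
    have a: "int (zc (step n \<omega>) n) = int (zc \<omega> n)" using zc_step[of n n \<omega>] by simp
    have "H n (step n \<omega>) m = int (zc \<omega> n) + (m - int n)" using 4 a by (simp add: H_def)
    moreover have "H n \<omega> (m - 1) = int (zc \<omega> n) + (m - 1 - int n)"
    proof (cases "m = int n + 1")
      case True then show ?thesis using H_nat[of n n \<omega>] by simp
    next
      case False then show ?thesis using 4 by (simp add: H_def)
    qed
    moreover have "H n \<omega> (m + 1) = int (zc \<omega> n) + (m + 1 - int n)" using 4 by (simp add: H_def)
    ultimately show ?thesis by simp
  qed
qed

lemma zc_step_n: "zc (step n \<omega>) n = zc \<omega> n"
  using zc_step[of n n \<omega>] by simp

lemma zc_iter_n: "zc ((step n ^^ t) \<omega>) n = zc \<omega> n"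
  by (induction t) (auto simp: zc_step_n)

lemma H_iter_upper:
  assumes "n \<ge> 1"
  shows "(\<forall>j\<le>t. H n \<omega> (m - int t + 2 * int j) - int j \<le> U) \<Longrightarrow> H n ((step n ^^ t) \<omega>) m \<le> U"
proof (induction t arbitrary: m U)
  case 0 then show ?case by simp
next
  case (Suc t)
  have 1: "H n ((step n ^^ t) \<omega>) (m - 1) \<le> U"
  proof (rule Suc.IH, intro allI impI)
    fix j assume "j \<le> t"
    then show "H n \<omega> (m - 1 - int t + 2 * int j) - int j \<le> U"
      using Suc.prems[rule_format, of j] by (simp add: algebra_simps)
  qed
  have 2: "H n ((step n ^^ t) \<omega>) (m + 1) \<le> U + 1"
  proof (rule Suc.IH, intro allI impI)
    fix j assume "j \<le> t"
    then show "H n \<omega> (m + 1 - int t + 2 * int j) - int j \<le> U + 1"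
      using Suc.prems[rule_format, of "Suc j"] by (simp add: algebra_simps)
  qed
  show ?case using 1 2 H_step[OF assms] by simp
qed

lemma H_iter_lower:
  assumes "n \<ge> 1"
  shows "H n \<omega> (m - int t) \<le> H n ((step n ^^ t) \<omega>) m"
proof (induction t arbitrary: m)
  case 0 then show ?case by simp
next
  case (Suc t)
  have "H n \<omega> (m - 1 - int t) \<le> H n ((step n ^^ t) \<omega>) (m - 1)" by (rule Suc.IH)
  then show ?case using H_step[OF assms] by (simp add: algebra_simps)
qed

lemma zc0_imp: "1 \<le> i \<Longrightarrow> zc \<omega> i = 0 \<Longrightarrow> \<omega> i"
  by (cases i) (auto split: if_splits)

lemma sorted_from_zc:
  assumes K: "K \<le> n" and zn: "zc \<omega> n = n - K"
    and le: "\<forall>m\<in>{1..n}. int (zc \<omega> m) \<le> max 0 (int m - int K)"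
  shows "is_sorted_str n \<omega>"
  unfolding is_sorted_str_def
proof (intro exI[of _ K] conjI ballI K)
  fix i assume i: "i \<in> {1..n}"
  show "\<omega> i = (i \<le> K)"
  proof (cases "i \<le> K")
    case True
    then have "zc \<omega> i = 0" using le i by force
    then show ?thesis using True i zc0_imp by auto
  next
    case False
    have "zc \<omega> n \<le> zc \<omega> i + (n - i)" using zc_lip[of i n \<omega>] i by simp
    then have "int (zc \<omega> n) \<le> int (zc \<omega> i) + (int n - int i)" using i by (auto simp: of_nat_diff)
    moreover have "int (zc \<omega> n) = int n - int K" using zn K by (simp add: of_nat_diff)
    ultimately have A: "int (zc \<omega> i) \<ge> int i - int K" by linarith
    obtain i' where i': "i = Suc i'" using i by (cases i) auto
    have B: "int (zc \<omega> i') \<le> int i' - int K"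
    proof (cases "i' = 0")
      case True then show ?thesis using False i' by simp
    next
      case f: False
      then show ?thesis using le[rule_format, of i'] i i' False by auto
    qed
    have "zc \<omega> i = zc \<omega> i' + (if \<omega> i then 0 else 1)" using i' by simp
    then show ?thesis using A B False i' by (auto split: if_splits)
  qed
qed

lemma zc_sorted:
  assumes "\<forall>i\<in>{1..n}. \<omega> i = (i \<le> j)" "m \<le> n"
  shows "zc \<omega> m = m - j"
  using assms(2)
proof (induction m)
  case 0 then show ?case by simp
next
  case (Suc m)
  have "\<omega> (Suc m) = (Suc m \<le> j)" using assms(1) Suc.prems by auto
  then show ?case using Suc by auto
qed

theorem T_bounds:
  assumes n: "n \<ge> 2" and w1: "\<not> \<omega> 1"
    and B: "\<forall>i\<in>{1..n}. 2 * int (zc \<omega> i) - int i \<le> int B"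
  shows "n - zc \<omega> n \<le> T_steps n \<omega> \<and> T_steps n \<omega> \<le> (n - zc \<omega> n) + B"
proof -
  define K where "K = n - zc \<omega> n"
  have Kn: "K \<le> n" and zn: "zc \<omega> n = n - K" using zc_le[of \<omega> n] by (auto simp: K_def)
  define t0 where "t0 = K + B"
  have n1: "n \<ge> 1" using n by simp
  have sorted0: "is_sorted_str n ((step n ^^ t0) \<omega>)"
  proof (rule sorted_from_zc[OF Kn])
    show "zc ((step n ^^ t0) \<omega>) n = n - K" using zc_iter_n zn by simp
    show "\<forall>m\<in>{1..n}. int (zc ((step n ^^ t0) \<omega>) m) \<le> max 0 (int m - int K)"
    proof
      fix m assume m: "m \<in> {1..n}"
      have "H n ((step n ^^ t0) \<omega>) (int m) \<le> max 0 (int m - int K)"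
      proof (rule H_iter_upper[OF n1], intro allI impI)
        fix j assume j: "j \<le> t0"
        define i where "i = int m - int t0 + 2 * int j"
        consider "i \<le> 0" | "1 \<le> i \<and> i \<le> int n" | "i > int n" by linarith
        then show "H n \<omega> (int m - int t0 + 2 * int j) - int j \<le> max 0 (int m - int K)"
        proof cases
          case 1 then show ?thesis by (simp add: H_def i_def[symmetric])
        next
          case 2
          define k where "k = nat i"
          have k: "i = int k" "k \<in> {1..n}" using 2 by (auto simp: k_def)
          have "2 * int (zc \<omega> k) - int k \<le> int B" using B k by blast
          then have "2 * (int (zc \<omega> k) - int j) \<le> int m - int K"
            using k i_def by (simp add: t0_def)
          then show ?thesis using 2 k by (simp add: H_def i_def[symmetric])
        next
          case 3
          have h: "H n \<omega> i = int (zc \<omega> n) + (i - int n)" using 3 by (simp add: H_def)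
          have "int (zc \<omega> n) = int n - int K" using zn Kn by (simp add: of_nat_diff)
          moreover have "int t0 = int K + int B" by (simp add: t0_def)
          ultimately show ?thesis using h j unfolding i_def by linarith
        qed
      qed
      then show "int (zc ((step n ^^ t0) \<omega>) m) \<le> max 0 (int m - int K)" using m by (simp add: H_def)
    qed
  qed
  have up: "T_steps n \<omega> \<le> t0" unfolding T_steps_def by (rule Least_le) (rule sorted0)
  define t where "t = T_steps n \<omega>"
  have st: "is_sorted_str n ((step n ^^ t) \<omega>)" unfolding t_def T_steps_def by (rule LeastI[of _ t0]) (rule sorted0)
  have low: "K \<le> t"
  proof (rule ccontr)
    assume "\<not> K \<le> t"
    then have tK: "t < K" by simp
    obtain j where j: "j \<le> n" "\<forall>i\<in>{1..n}. (step n ^^ t) \<omega> i = (i \<le> j)" using st by (auto simp: is_sorted_str_def)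
    have "zc ((step n ^^ t) \<omega>) n = n - j" using zc_sorted[OF j(2)] by simp
    then have "j = K" using zc_iter_n[where n=n and t=t and \<omega>=\<omega>] zn j(1) Kn by simp
    then have z0: "zc ((step n ^^ t) \<omega>) K = 0" using zc_sorted[OF j(2), of K] Kn by simp
    have "H n \<omega> (int K - int t) \<le> H n ((step n ^^ t) \<omega>) (int K)" by (rule H_iter_lower[OF n1])
    moreover have "H n \<omega> (int K - int t) = int (zc \<omega> (K - t))" using tK Kn H_nat[of "K - t" n \<omega>] by (simp add: of_nat_diff)
    moreover have "zc \<omega> 1 \<le> zc \<omega> (K - t)" using tK by (intro zc_mono) simp
    moreover have "zc \<omega> 1 = 1" using w1 by simp
    moreover have "H n ((step n ^^ t) \<omega>) (int K) = 0" using z0 tK Kn by (simp add: H_def)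
    ultimately show False by simp
  qed
  show ?thesis using up low by (simp add: K_def t_def t0_def)
qed




definition upd :: "nat \<Rightarrow> (nat \<Rightarrow> bool) \<Rightarrow> (nat \<Rightarrow> bool)" where
  "upd n \<eta> = fun_upd (fun_upd \<eta> 1 False) n True"

definition Pn :: "nat \<Rightarrow> real \<Rightarrow> (nat \<Rightarrow> bool) pmf" where
  "Pn n p = Pi_pmf {2..<n} False (\<lambda>_. bernoulli_pmf p)"

lemma strings_pmf_eq: "strings_pmf n p = map_pmf (upd n) (Pn n p)"
  by (simp add: strings_pmf_def upd_def[abs_def] Pn_def)

lemma finite_Pn: "finite (set_pmf (Pn n p))"
proof -
  have "set_pmf (Pn n p) \<subseteq> PiE_dflt {2..<n} False (set_pmf \<circ> (\<lambda>_. bernoulli_pmf p))"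
    unfolding Pn_def by (rule set_Pi_pmf_subset') simp
  moreover have "finite (PiE_dflt {2..<n} False (set_pmf \<circ> (\<lambda>_. bernoulli_pmf p)))"
    by (intro finite_PiE_dflt) auto
  ultimately show ?thesis by (rule finite_subset)
qed

lemma upd_1: "n \<ge> 2 \<Longrightarrow> \<not> upd n \<eta> 1" by (simp add: upd_def)
lemma upd_n: "upd n \<eta> n" by (simp add: upd_def)
lemma upd_mid: "2 \<le> k \<Longrightarrow> k < n \<Longrightarrow> upd n \<eta> k = \<eta> k" by (simp add: upd_def)

definition Sw :: "(nat \<Rightarrow> bool) \<Rightarrow> nat \<Rightarrow> int" where
  "Sw \<omega> i = 2 * int (zc \<omega> i) - int i"

lemma walk_prod:
  assumes n: "n \<ge> 2" and r: "r > 0"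
  shows "1 \<le> i \<Longrightarrow> i < n \<Longrightarrow> r powr (real_of_int (Sw (upd n \<eta>) i)) = r * (\<Prod>k\<in>{2..i}. (if \<eta> k then 1/r else r))"
proof (induction i)
  case 0 then show ?case by simp
next
  case (Suc i)
  show ?case
  proof (cases "i = 0")
    case True
    then show ?thesis using upd_1[OF n, of \<eta>] r by (simp add: Sw_def)
  next
    case False
    have IH: "r powr (real_of_int (Sw (upd n \<eta>) i)) = r * (\<Prod>k\<in>{2..i}. (if \<eta> k then 1/r else r))"
      using Suc False by simp
    have u: "upd n \<eta> (Suc i) = \<eta> (Suc i)" using False Suc.prems by (intro upd_mid) auto
    have sw: "real_of_int (Sw (upd n \<eta>) (Suc i)) = real_of_int (Sw (upd n \<eta>) i) + (if \<eta> (Suc i) then -1 else 1)"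
      using u by (simp add: Sw_def)
    have pr: "(\<Prod>k\<in>{2..Suc i}. (if \<eta> k then 1/r else r)) = (if \<eta> (Suc i) then 1/r else r) * (\<Prod>k\<in>{2..i}. (if \<eta> k then 1/r else r))"
    proof -
      have "{2..Suc i} = insert (Suc i) {2..i}" using False by auto
      then show ?thesis by simp
    qed
    show ?thesis unfolding sw pr using IH r
      by (cases "\<eta> (Suc i)") (simp_all add: powr_add powr_diff powr_minus divide_simps)
  qed
qed

lemma exp_walk:
  assumes n: "n \<ge> 2" and p: "1/2 < p" "p < 1" and r: "r = p / (1 - p)"
    and i: "1 \<le> i" "i < n"
  shows "measure_pmf.expectation (Pn n p) (\<lambda>\<eta>. r powr (real_of_int (Sw (upd n \<eta>) i))) = r"
proof -
  have rpos: "r > 0" using p r by simp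
  define g where "g k b = (if k \<le> i then (if b then 1/r else r) else 1::real)" for k b
  have eq: "r powr (real_of_int (Sw (upd n \<eta>) i)) = r * (\<Prod>k\<in>{2..<n}. g k (\<eta> k))" for \<eta>
  proof -
    have "(\<Prod>k\<in>{2..<n}. g k (\<eta> k)) = (\<Prod>k\<in>{k\<in>{2..<n}. k \<le> i}. (if \<eta> k then 1/r else r))"
      unfolding g_def by (subst prod.inter_filter[symmetric]) auto
    also have "{k\<in>{2..<n}. k \<le> i} = {2..i}" using i by auto
    finally show ?thesis using walk_prod[OF n rpos i] by simp
  qed
  have "measure_pmf.expectation (Pn n p) (\<lambda>\<eta>. \<Prod>k\<in>{2..<n}. g k (\<eta> k)) = (\<Prod>k\<in>{2..<n}. measure_pmf.expectation (bernoulli_pmf p) (g k))"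
    unfolding Pn_def
    by (rule expectation_prod_Pi_pmf) (auto intro: integrable_measure_pmf_finite simp: g_def rpos less_imp_le)
  also have "\<dots> = (\<Prod>k\<in>{2..<n}. 1)"
  proof (rule prod.cong[OF refl])
    fix k
    have "1 / r * p + r * (1 - p) = 1" using p by (simp add: r field_simps)
    then show "measure_pmf.expectation (bernoulli_pmf p) (g k) = 1" using p by (simp add: g_def)
  qed
  finally show ?thesis unfolding eq by simp
qed

lemma bad_prob:
  assumes n: "n \<ge> 2" and p: "1/2 < p" "p < 1" and r: "r = p / (1 - p)"
  shows "measure_pmf.prob (Pn n p) {\<eta>. \<exists>i\<in>{1..n}. real_of_int (Sw (upd n \<eta>) i) > a} \<le> real n * r * r powr (-a)"
proof -
  have "1 - p > 0" "1 - p < p" using p by auto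
  then have rpos: "r > 1" unfolding r by (simp add: less_divide_eq)
  define A where "A i = {\<eta>. real_of_int (Sw (upd n \<eta>) i) > a}" for i
  have sub: "{\<eta>. \<exists>i\<in>{1..n}. real_of_int (Sw (upd n \<eta>) i) > a} \<subseteq> (\<Union>i\<in>{1..<n}. A i)"
  proof safe
    fix \<eta> i assume i: "i \<in> {1..n}" and a: "a < real_of_int (Sw (upd n \<eta>) i)"
    show "\<eta> \<in> (\<Union>i\<in>{1..<n}. A i)"
    proof (cases "i = n")
      case False then show ?thesis using i a by (auto simp: A_def)
    next
      case True
      obtain m where m: "n = Suc m" using n by (cases n) auto
      have "zc (upd n \<eta>) n = zc (upd n \<eta>) m" using m upd_n[of n \<eta>] by simp
      then have "Sw (upd n \<eta>) n = Sw (upd n \<eta>) m - 1" using m by (simp add: Sw_def)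
      then have "\<eta> \<in> A m" using a True by (simp add: A_def)
      then show ?thesis using m n by auto
    qed
  qed
  have "measure_pmf.prob (Pn n p) {\<eta>. \<exists>i\<in>{1..n}. real_of_int (Sw (upd n \<eta>) i) > a}
        \<le> measure_pmf.prob (Pn n p) (\<Union>i\<in>{1..<n}. A i)"
    by (rule measure_pmf.finite_measure_mono[OF sub]) simp
  also have "\<dots> \<le> (\<Sum>i\<in>{1..<n}. measure_pmf.prob (Pn n p) (A i))"
    by (rule measure_pmf.finite_measure_subadditive_finite) auto
  also have "\<dots> \<le> (\<Sum>i\<in>{1..<n}. r / r powr a)"
  proof (rule sum_mono)
    fix i assume i: "i \<in> {1..<n}"
    have "A i \<subseteq> {\<eta> \<in> space (measure_pmf (Pn n p)). r powr a \<le> r powr (real_of_int (Sw (upd n \<eta>) i))}"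
      using rpos by (auto simp: A_def)
    then have "measure_pmf.prob (Pn n p) (A i) \<le> measure_pmf.prob (Pn n p) {\<eta> \<in> space (measure_pmf (Pn n p)). r powr a \<le> r powr (real_of_int (Sw (upd n \<eta>) i))}"
      by (intro measure_pmf.finite_measure_mono) auto
    also have "\<dots> \<le> measure_pmf.expectation (Pn n p) (\<lambda>\<eta>. r powr (real_of_int (Sw (upd n \<eta>) i))) / r powr a"
      using rpos by (intro integral_Markov_inequality_measure[where A = UNIV])
        (auto intro: integrable_measure_pmf_finite finite_Pn)
    also have "\<dots> = r / r powr a" using exp_walk[OF n p r, of i] i by simp
    finally show "measure_pmf.prob (Pn n p) (A i) \<le> r / r powr a" .
  qed
  also have "\<dots> = real (n - 1) * r / r powr a" by simp
  also have "\<dots> \<le> real n * r * r powr (-a)"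
    using rpos by (simp add: powr_minus divide_simps)
  finally show ?thesis .
qed



lemma char_normal:
  fixes \<sigma> :: real
  assumes s: "\<sigma> > 0"
  shows "char (density lborel (normal_density 0 \<sigma>)) t = complex_of_real (exp (-((\<sigma>*t)^2)/2))"
proof -
  interpret prob_space std_normal_distribution using real_dist_normal_dist by (simp add: real_distribution_def)
  have d0: "distributed std_normal_distribution lborel (\<lambda>x. x) (normal_density 0 1)"
    unfolding distributed_def by (auto simp: distr_id2)
  have "distributed std_normal_distribution lborel (\<lambda>x. 0 + \<sigma> * x) (normal_density (0 + \<sigma> * 0) (\<bar>\<sigma>\<bar> * 1))"
    by (rule normal_density_affine[OF d0]) (use s in auto)
  then have d: "distr std_normal_distribution lborel (\<lambda>x. \<sigma> * x) = density lborel (normal_density 0 \<sigma>)"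
    using s by (simp add: distributed_def)
  have "char (density lborel (normal_density 0 \<sigma>)) t = char (distr std_normal_distribution lborel (\<lambda>x. \<sigma> * x)) t"
    by (simp add: d)
  also have "\<dots> = (CLINT x|std_normal_distribution. iexp (t * (\<sigma> * x)))"
    unfolding char_def by (subst integral_distr) auto
  also have "\<dots> = char std_normal_distribution (\<sigma> * t)"
    unfolding char_def by (simp add: mult.assoc mult.left_commute)
  also have "\<dots> = complex_of_real (exp (-((\<sigma>*t)^2)/2))"
    by (simp add: char_std_normal_distribution)
  finally show ?thesis .
qed

lemma iexp_approx2':
  "cmod (iexp x - (1 + \<i> * complex_of_real x - complex_of_real (x^2/2))) \<le> \<bar>x\<bar>^3 / 6"
proof -
  have "(\<Sum>k \<le> 2. (\<i> * complex_of_real x)^k / fact k) = 1 + \<i> * complex_of_real x - complex_of_real (x^2/2)"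
    by (simp add: numeral_2_eq_2 power2_eq_square field_simps)
  moreover have "fact (Suc 2) = (6::real)" by (simp add: fact_numeral)
  ultimately show ?thesis using iexp_approx1[of x 2] by simp
qed

definition psi :: "real \<Rightarrow> real \<Rightarrow> complex" where
  "psi p s = complex_of_real (1-p) * iexp (-p* s) + complex_of_real p * iexp ((1-p)* s)"

lemma psi_approx:
  assumes "0 \<le> p" "p \<le> 1"
  shows "cmod (psi p s - complex_of_real (1 - p*(1-p)* s^2/2)) \<le> \<bar>s\<bar>^3"
proof -
  define A1 where "A1 = iexp (-p* s) - (1 + \<i> * complex_of_real (-p* s) - complex_of_real ((-p* s)^2/2))"
  define A2 where "A2 = iexp ((1-p)* s) - (1 + \<i> * complex_of_real ((1-p)* s) - complex_of_real (((1-p)* s)^2/2))"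
  have eq: "psi p s - complex_of_real (1 - p*(1-p)* s^2/2) = complex_of_real (1-p) * A1 + complex_of_real p * A2"
  proof -
    have r: "(1 - p) * (1 - (- p * s)\<^sup>2 / 2) + p * (1 - ((1 - p) * s)\<^sup>2 / 2) = 1 - p * (1 - p) * s\<^sup>2 / (2::real)"
      by (simp add: power2_eq_square field_simps)
    have "complex_of_real (1 - p) * (1 + \<i> * complex_of_real (- p * s) - complex_of_real ((- p * s)\<^sup>2 / 2)) +
      complex_of_real p * (1 + \<i> * complex_of_real ((1 - p) * s) - complex_of_real (((1 - p) * s)\<^sup>2 / 2))
      = complex_of_real (1 - p * (1 - p) * s\<^sup>2 / 2)"
      using r by (simp only: complex_eq_iff) (simp add: algebra_simps)
    then show ?thesis unfolding psi_def A1_def A2_def by (simp add: algebra_simps)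
  qed
  have b1: "cmod A1 \<le> \<bar>s\<bar>^3 / 6"
  proof -
    have "cmod A1 \<le> \<bar>-p * s\<bar>^3/6" unfolding A1_def by (rule iexp_approx2')
    also have "\<dots> \<le> \<bar>s\<bar>^3/6"
    proof -
      have "p^3 \<le> 1" using assms by (simp add: power_le_one)
      then have "p^3 * \<bar>s\<bar>^3 \<le> \<bar>s\<bar>^3" using assms by (intro mult_left_le_one_le) auto
      then show ?thesis using assms by (simp add: abs_mult power_mult_distrib)
    qed
    finally show ?thesis .
  qed
  have b2: "cmod A2 \<le> \<bar>s\<bar>^3 / 6"
  proof -
    have "cmod A2 \<le> \<bar>(1-p) * s\<bar>^3/6" unfolding A2_def by (rule iexp_approx2')
    also have "\<dots> \<le> \<bar>s\<bar>^3/6"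
    proof -
      have "(1-p)^3 \<le> 1" using assms by (simp add: power_le_one)
      then have "(1-p)^3 * \<bar>s\<bar>^3 \<le> \<bar>s\<bar>^3" using assms by (intro mult_left_le_one_le) auto
      then show ?thesis using assms by (simp add: abs_mult power_mult_distrib)
    qed
    finally show ?thesis .
  qed
  have "cmod (complex_of_real (1-p) * A1 + complex_of_real p * A2) \<le> (1-p) * cmod A1 + p * cmod A2"
    by (rule order_trans[OF norm_triangle_ineq]) (use assms in \<open>simp add: norm_mult del: of_real_diff\<close>)
  also have "\<dots> \<le> (1-p) * (\<bar>s\<bar>^3/6) + p * (\<bar>s\<bar>^3/6)"
    using assms b1 b2 by (intro add_mono mult_left_mono) auto
  also have "\<dots> = \<bar>s\<bar>^3 / 6" by (simp only: distrib_right[symmetric]) simp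
  also have "\<dots> \<le> \<bar>s\<bar>^3" by simp
  finally show ?thesis unfolding eq .
qed

lemma psi_norm: "0 \<le> p \<Longrightarrow> p \<le> 1 \<Longrightarrow> cmod (psi p s) \<le> 1"
  unfolding psi_def
  by (rule order_trans[OF norm_triangle_ineq]) (simp add: norm_mult del: of_real_diff)



lemma iexp_add: "iexp (a + b) = iexp a * iexp b"
  by (simp add: distrib_left exp_add)

lemma phi_eq:
  assumes n: "n \<ge> 2"
  shows "iexp (t * (1 - real n * p) / sqrt (real n)) * (complex_of_real (1-p) + complex_of_real p * iexp (t / sqrt (real n)))^(n-2)
       = iexp ((t / sqrt (real n)) * (1 - 2*p)) * psi p (t / sqrt (real n)) ^ (n-2)"
proof -
  define s where "s = t / sqrt (real n)"
  define m where "m = n - 2"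
  have nm: "real n = real m + 2" using n by (simp add: m_def)
  have a: "t * (1 - real n * p) / sqrt (real n) = s * (1 - 2*p) + real m * (-p * s)"
    unfolding s_def nm by (simp add: field_simps)
  have b: "iexp (s * (1 - 2*p) + real m * (-p * s)) = iexp (s * (1 - 2*p)) * iexp (-p * s) ^ m"
  proof -
    have "iexp (s * (1 - 2*p) + real m * (-p * s)) = iexp (s * (1 - 2*p)) * iexp (real m * (-p * s))"
      by (rule iexp_add)
    also have "iexp (real m * (-p * s)) = exp (of_nat m * (\<i> * complex_of_real (-p * s)))"
      by (simp add: algebra_simps)
    also have "\<dots> = iexp (-p * s) ^ m" by (rule exp_of_nat_mult)
    finally show ?thesis .
  qed
  have c: "iexp (-p * s) * (complex_of_real (1-p) + complex_of_real p * iexp s) = psi p s"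
  proof -
    have "(1-p) * s = -p * s + s" by (simp add: algebra_simps)
    then have "iexp (-p * s) * iexp s = iexp ((1-p) * s)"
      by (simp only: iexp_add)
    then show ?thesis unfolding psi_def by (simp add: algebra_simps)
  qed
  have "iexp (t * (1 - real n * p) / sqrt (real n)) * (complex_of_real (1-p) + complex_of_real p * iexp s)^m
     = iexp (s * (1 - 2*p)) * (iexp (-p * s) * (complex_of_real (1-p) + complex_of_real p * iexp s))^m"
    unfolding a b by (simp add: power_mult_distrib)
  then show ?thesis unfolding c by (simp add: s_def m_def)
qed

lemma phi_lim:
  assumes p: "0 < p" "p < 1"
  shows "(\<lambda>n. iexp (t * (1 - real n * p) / sqrt (real n)) * (complex_of_real (1-p) + complex_of_real p * iexp (t / sqrt (real n)))^(n-2))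
     \<longlonglongrightarrow> complex_of_real (exp (-(p*(1-p))*t^2/2))"
proof -
  define s where "s n = t / sqrt (real n)" for n
  define x where "x = -(p*(1-p))*t^2/2"
  define q where "q n = 1 + x / real n" for n
  have s0: "s \<longlonglongrightarrow> 0" unfolding s_def by real_asymp
  have b: "(\<lambda>n. iexp (s n * (1 - 2*p))) \<longlonglongrightarrow> 1"
  proof -
    have "(\<lambda>n. iexp (s n * (1 - 2*p))) \<longlonglongrightarrow> iexp (0 * (1 - 2*p))"
      by (intro tendsto_intros s0)
    then show ?thesis by simp
  qed
  have d: "(\<lambda>n. q n ^ (n-2)) \<longlonglongrightarrow> exp x"
  proof -
    have l1: "(\<lambda>n. (1 + x / real n)^n) \<longlonglongrightarrow> exp x" by (rule tendsto_exp_limit_sequentially)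
    have l2: "(\<lambda>n. (1 + x / real n)^2) \<longlonglongrightarrow> 1" by real_asymp
    have "(\<lambda>n. (1 + x / real n)^n / (1 + x / real n)^2) \<longlonglongrightarrow> exp x / 1"
      by (intro tendsto_divide l1 l2) simp
    moreover have "eventually (\<lambda>n. (1 + x / real n)^n / (1 + x / real n)^2 = q n ^ (n-2)) sequentially"
    proof -
      have "eventually (\<lambda>n. real n \<ge> max 2 (\<bar>x\<bar> + 1)) sequentially" by real_asymp
      then show ?thesis
      proof eventually_elim
        case (elim n)
        then have n2: "n \<ge> 2" by simp
        have xn: "\<bar>x\<bar> < real n" using elim by simp
        then have "\<bar>x / real n\<bar> < 1" by (simp add: abs_divide)
        then have nz: "1 + x / real n \<noteq> 0" by linarith
        have "n = (n-2) + 2" using n2 by simp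
        then have "(1 + x / real n)^n = (1 + x / real n)^(n-2) * (1 + x / real n)^2"
          by (metis power_add)
        then show ?case using nz by (simp add: q_def)
      qed
    qed
    ultimately show ?thesis by (simp add: tendsto_cong)
  qed
  have c: "(\<lambda>n. psi p (s n) ^ (n-2) - complex_of_real (q n) ^ (n-2)) \<longlonglongrightarrow> 0"
  proof (rule Lim_null_comparison)
    have l: "(\<lambda>n. \<bar>t\<bar>^3 / sqrt (real n)) \<longlonglongrightarrow> 0" by real_asymp
    show "(\<lambda>n. \<bar>t\<bar>^3 / sqrt (real n)) \<longlonglongrightarrow> 0" by (rule l)
    have "eventually (\<lambda>n. real n \<ge> max 2 (\<bar>x\<bar> + 1)) sequentially" by real_asymp
    then show "\<forall>\<^sub>F n in sequentially. norm (psi p (s n) ^ (n-2) - complex_of_real (q n) ^ (n-2)) \<le> \<bar>t\<bar>^3 / sqrt (real n)"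
    proof eventually_elim
      case (elim n)
      then have n2: "n \<ge> 2" and npos: "real n > 0" by auto
      have xn: "\<bar>x\<bar> < real n" using elim by simp
      then have "\<bar>x / real n\<bar> < 1" by (simp add: abs_divide)
      then have xb: "x / real n > -1" by linarith
      have xle: "x \<le> 0" using p by (simp add: x_def)
      have "x / real n \<le> 0" using xle npos by (simp add: divide_nonpos_pos)
      then have "\<bar>q n\<bar> \<le> 1" using xb unfolding q_def by linarith
      then have qn: "norm (complex_of_real (q n)) \<le> 1" by (simp only: norm_of_real)
      have sq: "s n ^ 2 = t^2 / real n" using npos by (simp add: s_def power_divide)
      have qeq: "q n = 1 - p*(1-p)*(s n)^2/2" by (simp add: q_def x_def sq)
      have "norm (psi p (s n) ^ (n-2) - complex_of_real (q n) ^ (n-2)) \<le> real (n-2) * norm (psi p (s n) - complex_of_real (q n))"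
        by (rule norm_power_diff[OF psi_norm qn]) (use p in auto)
      also have "\<dots> \<le> real (n-2) * \<bar>s n\<bar>^3"
        unfolding qeq by (intro mult_left_mono psi_approx) (use p in auto)
      also have "\<dots> \<le> real n * \<bar>s n\<bar>^3" by (intro mult_right_mono) auto
      also have "\<dots> = \<bar>t\<bar>^3 / sqrt (real n)"
      proof -
        have "sqrt (real n) ^ 3 = real n * sqrt (real n)"
          using npos by (simp add: power3_eq_cube)
        then show ?thesis using npos by (simp add: s_def abs_div power_divide field_simps)
      qed
      finally show ?case .
    qed
  qed
  have "(\<lambda>n. iexp (s n * (1 - 2*p)) * (complex_of_real (q n ^ (n-2)) + (psi p (s n) ^ (n-2) - complex_of_real (q n) ^ (n-2))))
      \<longlonglongrightarrow> 1 * (complex_of_real (exp x) + 0)"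
    by (intro tendsto_intros b c d)
  moreover have "eventually (\<lambda>n. iexp (s n * (1 - 2*p)) * (complex_of_real (q n ^ (n-2)) + (psi p (s n) ^ (n-2) - complex_of_real (q n) ^ (n-2)))
      = iexp (t * (1 - real n * p) / sqrt (real n)) * (complex_of_real (1-p) + complex_of_real p * iexp (t / sqrt (real n)))^(n-2)) sequentially"
    using eventually_ge_at_top[of 2]
  proof eventually_elim
    case (elim n)
    have e: "complex_of_real (q n ^ (n-2)) + (psi p (s n)^(n-2) - complex_of_real (q n)^(n-2)) = psi p (s n)^(n-2)" by simp
    show ?case unfolding e unfolding s_def by (rule phi_eq[OF elim, symmetric])
  qed
  ultimately show ?thesis by (simp add: x_def tendsto_cong)
qed



lemma ones_upd:
  assumes n: "n \<ge> 2"
  shows "1 \<le> i \<Longrightarrow> i < n \<Longrightarrow> real i - real (zc (upd n \<eta>) i) = (\<Sum>k\<in>{2..i}. of_bool (\<eta> k))"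
proof (induction i)
  case 0 then show ?case by simp
next
  case (Suc i)
  show ?case
  proof (cases "i = 0")
    case True
    then show ?thesis using upd_1[OF n, of \<eta>] by simp
  next
    case False
    have IH: "real i - real (zc (upd n \<eta>) i) = (\<Sum>k\<in>{2..i}. of_bool (\<eta> k))"
      using Suc False by simp
    have u: "upd n \<eta> (Suc i) = \<eta> (Suc i)" using False Suc.prems by (intro upd_mid) auto
    have "{2..Suc i} = insert (Suc i) {2..i}" using False by auto
    then have "(\<Sum>k\<in>{2..Suc i}. of_bool (\<eta> k)) = of_bool (\<eta> (Suc i)) + (\<Sum>k\<in>{2..i}. of_bool (\<eta> k) :: real)" by simp
    then show ?thesis using IH u by simp
  qed
qed

lemma K_upd:
  assumes n: "n \<ge> 2"
  shows "real (n - zc (upd n \<eta>) n) = 1 + (\<Sum>k\<in>{2..<n}. of_bool (\<eta> k))"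
proof -
  obtain m where m: "n = Suc m" using n by (cases n) auto
  have z: "zc (upd n \<eta>) n = zc (upd n \<eta>) m" using m upd_n[of n \<eta>] by simp
  have "real m - real (zc (upd n \<eta>) m) = (\<Sum>k\<in>{2..m}. of_bool (\<eta> k))"
    using ones_upd[OF n, of m \<eta>] m n by simp
  moreover have "{2..m} = {2..<n}" using m by auto
  moreover have "zc (upd n \<eta>) m \<le> m" by (rule zc_le)
  ultimately show ?thesis using z m by (simp add: of_nat_diff)
qed

definition Wf :: "nat \<Rightarrow> real \<Rightarrow> (nat \<Rightarrow> bool) \<Rightarrow> real" where
  "Wf n p \<omega> = (real (n - zc \<omega> n) - real n * p) / sqrt (real n)"

lemma char_W:
  assumes n: "n \<ge> 2" and p: "0 \<le> p" "p \<le> 1"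
  shows "char (distr (measure_pmf (strings_pmf n p)) borel (Wf n p)) t
     = iexp (t * (1 - real n * p) / sqrt (real n)) * (complex_of_real (1-p) + complex_of_real p * iexp (t / sqrt (real n)))^(n-2)"
proof -
  define X where "X k \<eta> = of_bool (\<eta> k) / sqrt (real n)" for k and \<eta> :: "nat \<Rightarrow> bool"
  define c where "c = (1 - real n * p) / sqrt (real n)"
  have W: "Wf n p (upd n \<eta>) = c + (\<Sum>k\<in>{2..<n}. X k \<eta>)" for \<eta>
  proof -
    define S where "S = (\<Sum>k\<in>{2..<n}. of_bool (\<eta> k) :: real)"
    have "(\<Sum>k\<in>{2..<n}. X k \<eta>) = S / sqrt (real n)"
      unfolding S_def X_def by (rule sum_divide_distrib[symmetric])
    moreover have "Wf n p (upd n \<eta>) = (1 + S - real n * p) / sqrt (real n)"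
      unfolding Wf_def K_upd[OF n] S_def ..
    ultimately show ?thesis unfolding c_def by (simp add: add_divide_distrib[symmetric] diff_divide_distrib[symmetric] algebra_simps)
  qed
  have "char (distr (measure_pmf (strings_pmf n p)) borel (Wf n p)) t = (CLINT \<omega>|measure_pmf (strings_pmf n p). iexp (t * Wf n p \<omega>))"
    unfolding char_def by (subst integral_distr) auto
  also have "\<dots> = (CLINT \<eta>|measure_pmf (Pn n p). iexp (t * Wf n p (upd n \<eta>)))"
    by (simp add: strings_pmf_eq)
  also have "\<dots> = (CLINT \<eta>|measure_pmf (Pn n p). iexp (t * c) * iexp (t * (\<Sum>k\<in>{2..<n}. X k \<eta>)))"
    unfolding W distrib_left iexp_add by (rule refl)
  also have "\<dots> = iexp (t * c) * (CLINT \<eta>|measure_pmf (Pn n p). iexp (t * (\<Sum>k\<in>{2..<n}. X k \<eta>)))"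
    by (rule integral_mult_right_zero)
  also have "(CLINT \<eta>|measure_pmf (Pn n p). iexp (t * (\<Sum>k\<in>{2..<n}. X k \<eta>))) = char (distr (measure_pmf (Pn n p)) borel (\<lambda>\<eta>. \<Sum>k\<in>{2..<n}. X k \<eta>)) t"
    unfolding char_def by (subst integral_distr) auto
  also have "\<dots> = (\<Prod>k\<in>{2..<n}. char (distr (measure_pmf (Pn n p)) borel (X k)) t)"
  proof (rule prob_space.char_distr_sum[OF measure_pmf.prob_space_axioms])
    have "prob_space.indep_vars (measure_pmf (Pn n p)) (\<lambda>_. count_space UNIV) (\<lambda>x f. f x) {2..<n}"
      unfolding Pn_def by (rule indep_vars_Pi_pmf) simp
    then show "prob_space.indep_vars (measure_pmf (Pn n p)) (\<lambda>i. borel) X {2..<n}"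
      unfolding X_def by (rule prob_space.indep_vars_compose2[OF measure_pmf.prob_space_axioms, where Y = "\<lambda>k b. of_bool b / sqrt (real n)", simplified]) auto
  qed
  also have "\<dots> = (\<Prod>k\<in>{2..<n}. complex_of_real (1-p) + complex_of_real p * iexp (t / sqrt (real n)))"
  proof (rule prod.cong[OF refl])
    fix k assume k: "k \<in> {2..<n}"
    have "char (distr (measure_pmf (Pn n p)) borel (X k)) t = (CLINT \<eta>|measure_pmf (Pn n p). iexp (t * (of_bool (\<eta> k) / sqrt (real n))))"
      unfolding char_def X_def by (subst integral_distr) auto
    also have "\<dots> = (CLINT b|measure_pmf (map_pmf (\<lambda>f. f k) (Pn n p)). iexp (t * (of_bool b / sqrt (real n))))"
      by simp
    also have "map_pmf (\<lambda>f. f k) (Pn n p) = bernoulli_pmf p"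
      unfolding Pn_def using k by (subst Pi_pmf_component) auto
    also have "(CLINT b|measure_pmf (bernoulli_pmf p). iexp (t * (of_bool b / sqrt (real n))))
        = (\<Sum>b\<in>UNIV. pmf (bernoulli_pmf p) b *\<^sub>R iexp (t * (of_bool b / sqrt (real n))))"
      by (rule integral_measure_pmf) auto
    also have "\<dots> = complex_of_real (1-p) + complex_of_real p * iexp (t / sqrt (real n))"
      using p by (simp add: UNIV_bool scaleR_conv_of_real)
    finally show "char (distr (measure_pmf (Pn n p)) borel (X k)) t = complex_of_real (1-p) + complex_of_real p * iexp (t / sqrt (real n))" .
  qed
  also have "\<dots> = (complex_of_real (1-p) + complex_of_real p * iexp (t / sqrt (real n)))^(n-2)"
    by simp
  finally show ?thesis by (simp add: c_def)
qed

lemma iexp_diff: "cmod (iexp u - iexp v) \<le> \<bar>u - v\<bar>"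
proof -
  have "iexp u - iexp v = iexp v * (iexp (u - v) - 1)"
    using iexp_add[of v "u - v"] by (simp add: algebra_simps)
  moreover have "cmod (iexp (u - v) - 1) \<le> \<bar>u - v\<bar>"
    using iexp_approx1[of "u - v" 0] by simp
  moreover have "cmod (iexp v) = 1" by simp
  ultimately show ?thesis by (simp add: norm_mult)
qed



lemma finite_strings: "finite (set_pmf (strings_pmf n p))"
  unfolding strings_pmf_eq by (simp add: finite_Pn)

lemma char_diff_bound:
  assumes n: "n \<ge> 2" and p: "1/2 < p" "p < 1" and r: "r = p / (1 - p)" and a: "a \<ge> 0"
  shows "cmod (char (distr (measure_pmf (strings_pmf n p)) borel (\<lambda>\<omega>. (real (T_steps n \<omega>) - real n * p) / sqrt (real n))) t
              - char (distr (measure_pmf (strings_pmf n p)) borel (Wf n p)) t)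
         \<le> \<bar>t\<bar> * a / sqrt (real n) + 2 * (real n * r * r powr (-a))"
proof -
  define Y where "Y \<omega> = (real (T_steps n \<omega>) - real n * p) / sqrt (real n)" for \<omega>
  define Bad where "Bad = {\<eta>. \<exists>i\<in>{1..n}. real_of_int (Sw (upd n \<eta>) i) > a}"
  define g where "g \<eta> = cmod (iexp (t * Y (upd n \<eta>)) - iexp (t * Wf n p (upd n \<eta>)))" for \<eta>
  have int1: "integrable (measure_pmf (strings_pmf n p)) f" for f :: "_ \<Rightarrow> complex"
    by (rule integrable_measure_pmf_finite[OF finite_strings])
  have int2: "integrable (measure_pmf (Pn n p)) f" for f :: "_ \<Rightarrow> real"
    by (rule integrable_measure_pmf_finite[OF finite_Pn])
  have "char (distr (measure_pmf (strings_pmf n p)) borel Y) t - char (distr (measure_pmf (strings_pmf n p)) borel (Wf n p)) t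
      = (CLINT \<omega>|measure_pmf (strings_pmf n p). iexp (t * Y \<omega>)) - (CLINT \<omega>|measure_pmf (strings_pmf n p). iexp (t * Wf n p \<omega>))"
    unfolding char_def by (subst (1 2) integral_distr) auto
  also have "\<dots> = (CLINT \<omega>|measure_pmf (strings_pmf n p). iexp (t * Y \<omega>) - iexp (t * Wf n p \<omega>))"
    by (rule Bochner_Integration.integral_diff[symmetric]) (rule int1)+
  also have "\<dots> = (CLINT \<eta>|measure_pmf (Pn n p). iexp (t * Y (upd n \<eta>)) - iexp (t * Wf n p (upd n \<eta>)))"
    by (simp add: strings_pmf_eq)
  finally have eq: "char (distr (measure_pmf (strings_pmf n p)) borel Y) t - char (distr (measure_pmf (strings_pmf n p)) borel (Wf n p)) t
      = (CLINT \<eta>|measure_pmf (Pn n p). iexp (t * Y (upd n \<eta>)) - iexp (t * Wf n p (upd n \<eta>)))" .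
  have pw: "g \<eta> \<le> \<bar>t\<bar> * a / sqrt (real n) + 2 * indicator Bad \<eta>" for \<eta>
  proof (cases "\<eta> \<in> Bad")
    case True
    have "g \<eta> \<le> cmod (iexp (t * Y (upd n \<eta>))) + cmod (iexp (t * Wf n p (upd n \<eta>)))"
      unfolding g_def by (rule norm_triangle_ineq4)
    also have "\<dots> = 2" by simp
    moreover have "0 \<le> \<bar>t\<bar> * a / sqrt (real n)" using a by simp
    ultimately show ?thesis using True by simp
  next
    case False
    define \<omega> where "\<omega> = upd n \<eta>"
    define B where "B = nat \<lfloor>a\<rfloor>"
    have Ba: "real B \<le> a" using a by (simp add: B_def)
    have hB: "\<forall>i\<in>{1..n}. 2 * int (zc \<omega> i) - int i \<le> int B"
    proof
      fix i assume i: "i \<in> {1..n}"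
      have "\<not> a < real_of_int (Sw \<omega> i)" using False i unfolding Bad_def \<omega>_def by blast
      then have "real_of_int (Sw \<omega> i) \<le> a" by simp
      then have "Sw \<omega> i \<le> \<lfloor>a\<rfloor>" by (simp add: le_floor_iff)
      then show "2 * int (zc \<omega> i) - int i \<le> int B" using a by (simp add: B_def Sw_def)
    qed
    have tb: "n - zc \<omega> n \<le> T_steps n \<omega> \<and> T_steps n \<omega> \<le> (n - zc \<omega> n) + B"
      by (rule T_bounds[OF n _ hB]) (use upd_1[OF n, of \<eta>] in \<open>simp add: \<omega>_def\<close>)
    have d: "Y \<omega> - Wf n p \<omega> = (real (T_steps n \<omega>) - real (n - zc \<omega> n)) / sqrt (real n)"
      unfolding Y_def Wf_def by (simp add: diff_divide_distrib)
    have "0 \<le> real (T_steps n \<omega>) - real (n - zc \<omega> n)" "real (T_steps n \<omega>) - real (n - zc \<omega> n) \<le> a"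
      using tb Ba by auto
    then have "\<bar>Y \<omega> - Wf n p \<omega>\<bar> \<le> a / sqrt (real n)"
      unfolding d by (simp add: abs_div divide_right_mono)
    then have "\<bar>t\<bar> * \<bar>Y \<omega> - Wf n p \<omega>\<bar> \<le> \<bar>t\<bar> * (a / sqrt (real n))"
      by (rule mult_left_mono) simp
    then have "\<bar>t * Y \<omega> - t * Wf n p \<omega>\<bar> \<le> \<bar>t\<bar> * (a / sqrt (real n))"
      by (simp add: right_diff_distrib[symmetric] abs_mult)
    moreover have "g \<eta> \<le> \<bar>t * Y \<omega> - t * Wf n p \<omega>\<bar>" unfolding g_def \<omega>_def by (rule iexp_diff)
    ultimately show ?thesis using False by simp
  qed
  have "cmod (CLINT \<eta>|measure_pmf (Pn n p). iexp (t * Y (upd n \<eta>)) - iexp (t * Wf n p (upd n \<eta>)))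
        \<le> (\<integral>\<eta>. g \<eta> \<partial>measure_pmf (Pn n p))"
    unfolding g_def by (rule integral_norm_bound)
  also have "\<dots> \<le> (\<integral>\<eta>. \<bar>t\<bar> * a / sqrt (real n) + 2 * indicator Bad \<eta> \<partial>measure_pmf (Pn n p))"
    by (rule integral_mono[OF int2 int2 pw])
  also have "\<dots> = \<bar>t\<bar> * a / sqrt (real n) + 2 * measure_pmf.prob (Pn n p) Bad"
    by (subst Bochner_Integration.integral_add) (auto intro: int2 simp: measure_pmf.prob_space)
  also have "\<dots> \<le> \<bar>t\<bar> * a / sqrt (real n) + 2 * (real n * r * r powr (-a))"
    using bad_prob[OF n p r, of a] by (simp add: Bad_def)
  finally have fin: "cmod (CLINT \<eta>|measure_pmf (Pn n p). iexp (t * Y (upd n \<eta>)) - iexp (t * Wf n p (upd n \<eta>)))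
        \<le> \<bar>t\<bar> * a / sqrt (real n) + 2 * (real n * r * r powr (-a))" .
  have Yc: "(\<lambda>\<omega>. (real (T_steps n \<omega>) - real n * p) / sqrt (real n)) = Y" by (simp add: Y_def fun_eq_iff)
  show ?thesis unfolding Yc eq by (rule fin)
qed

theorem lemma3p3:
  fixes p :: real
  assumes "1/2 < p" and "p < 1"
  shows "weak_conv_m
           (\<lambda>n. distr (measure_pmf (strings_pmf n p)) borel
                   (\<lambda>\<omega>. (real (T_steps n \<omega>) - real n * p) / sqrt (real n)))
           (density lborel (normal_density 0 (sqrt (p * (1 - p)))))"
proof (rule levy_continuity)
  have p: "1/2 < p" "p < 1" by fact+
  define r where "r = p / (1 - p)"
  have "1 - p > 0" "1 - p < p" using p by auto
  then have r1: "r > 1" unfolding r_def by (simp add: less_divide_eq)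
  have sp: "sqrt (p * (1 - p)) > 0" using p by simp
  show "real_distribution (distr (measure_pmf (strings_pmf n p)) borel (\<lambda>\<omega>. (real (T_steps n \<omega>) - real n * p) / sqrt (real n)))" for n
    by (rule prob_space.real_distribution_distr[OF measure_pmf.prob_space_axioms]) simp
  show "real_distribution (density lborel (normal_density 0 (sqrt (p * (1 - p)))))"
    unfolding real_distribution_def real_distribution_axioms_def
    using sp by (simp add: prob_space_normal_density)
  fix t
  define Yc where "Yc n = char (distr (measure_pmf (strings_pmf n p)) borel (\<lambda>\<omega>. (real (T_steps n \<omega>) - real n * p) / sqrt (real n))) t" for n
  define Wc where "Wc n = char (distr (measure_pmf (strings_pmf n p)) borel (Wf n p)) t" for n
  have target: "char (density lborel (normal_density 0 (sqrt (p * (1 - p))))) t = complex_of_real (exp (-(p*(1-p))*t^2/2))"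
    using char_normal[OF sp, of t] p by (simp add: power_mult_distrib)
  have W: "Wc \<longlonglongrightarrow> complex_of_real (exp (-(p*(1-p))*t^2/2))"
  proof -
    have "eventually (\<lambda>n. iexp (t * (1 - real n * p) / sqrt (real n)) * (complex_of_real (1-p) + complex_of_real p * iexp (t / sqrt (real n)))^(n-2) = Wc n) sequentially"
      using eventually_ge_at_top[of 2]
      by eventually_elim (use p in \<open>simp add: Wc_def char_W\<close>)
    with phi_lim[of p t] p show ?thesis by (simp add: tendsto_cong)
  qed
  have D: "(\<lambda>n. Yc n - Wc n) \<longlonglongrightarrow> 0"
  proof (rule Lim_null_comparison)
    show "(\<lambda>n. \<bar>t\<bar> * real n powr (1/4) / sqrt (real n) + 2 * (real n * r * r powr (- (real n powr (1/4))))) \<longlonglongrightarrow> 0"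
      using r1 by real_asymp
    show "\<forall>\<^sub>F n in sequentially. norm (Yc n - Wc n) \<le> \<bar>t\<bar> * real n powr (1/4) / sqrt (real n) + 2 * (real n * r * r powr (- (real n powr (1/4))))"
      using eventually_ge_at_top[of 2]
    proof eventually_elim
      case (elim n)
      show ?case unfolding Yc_def Wc_def
        by (rule char_diff_bound[OF elim p r_def]) simp
    qed
  qed
  have "(\<lambda>n. Wc n + (Yc n - Wc n)) \<longlonglongrightarrow> complex_of_real (exp (-(p*(1-p))*t^2/2)) + 0"
    by (intro tendsto_add W D)
  then show "(\<lambda>n. char (distr (measure_pmf (strings_pmf n p)) borel (\<lambda>\<omega>. (real (T_steps n \<omega>) - real n * p) / sqrt (real n))) t)
      \<longlonglongrightarrow> char (density lborel (normal_density 0 (sqrt (p * (1 - p))))) t"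
    unfolding target by (simp add: Yc_def)
qed


end
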